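(* Let $X$ and $Y$ be real Banach spaces with $Y$ reflexive. Let $F\colon X\to Y$ be a continuous function and let $L>0$. For each $y^*\in Y^*$ define $\phi_{y^*}\colon X\to\mathbb{R}$ by $\phi_{y^*}(x)=y^*(F(x))$. Suppose that for each $y^*\in Y^*$ with $\|y^*\|\le 1$, the function $\phi_{y^*}$ is Fréchet differentiable on $X$ and its derivative $\phi_{y^*}'\colon X\to X^*$ is $L$-Lipschitz continuous. Then $F$ is Fréchet differentiable on $X$ and its derivative $F'\colon X\to\mathcal{B}(X,Y)$ is $L$-Lipschitz continuous, i.e. $\|F'(x)-F'(y)\|\le L\|x-y\|$ for all $x,y\in X$ (operator norm on the left).
   Context: $X^*$, $Y^*$ denote the continuous dual spaces with dual norms; $\mathcal{B}(X,Y)$ is the space of bounded linear operators $X\to Y$ with the operator norm $\|T\|=\sup_{\|x\|\le 1}\|T(x)\|$. *)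

theory Defs
  imports "HOL-Analysis.Analysis"
begin

definition reflexive_space :: "'b::real_normed_vector itself \<Rightarrow> bool" where
  "reflexive_space _ \<longleftrightarrow>
     (\<forall>\<psi> :: ('b \<Rightarrow>\<^sub>L real) \<Rightarrow>\<^sub>L real. \<exists>y::'b. \<forall>f. blinfun_apply \<psi> f = blinfun_apply f y)"

end

theory Submission imports Defs begin

definition hbgood :: "'b::real_normed_vector \<Rightarrow> ('b \<times> real) set \<Rightarrow> bool" where
  "hbgood y0 G \<longleftrightarrow> (y0, norm y0) \<in> G \<and>
     (\<forall>x a y b. (x,a)\<in>G \<longrightarrow> (y,b)\<in>G \<longrightarrow> (x+y,a+b)\<in>G) \<and>
     (\<forall>x a c. (x,a)\<in>G \<longrightarrow> (c *\<^sub>R x, c*a)\<in>G) \<and>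
     (\<forall>x a. (x,a)\<in>G \<longrightarrow> a \<le> norm x)"

lemma hbgoodD:
  assumes "hbgood y0 G"
  shows "(y0, norm y0) \<in> G"
    and "\<And>x a y b. (x,a)\<in>G \<Longrightarrow> (y,b)\<in>G \<Longrightarrow> (x+y,a+b)\<in>G"
    and "\<And>x a c. (x,a)\<in>G \<Longrightarrow> (c *\<^sub>R x, c*a)\<in>G"
    and "\<And>x a. (x,a)\<in>G \<Longrightarrow> a \<le> norm x"
  using assms unfolding hbgood_def by blast+

lemma hbgoodI:
  assumes "(y0, norm y0) \<in> G"
    and "\<And>x a y b. (x,a)\<in>G \<Longrightarrow> (y,b)\<in>G \<Longrightarrow> (x+y,a+b)\<in>G"
    and "\<And>x a c. (x,a)\<in>G \<Longrightarrow> (c *\<^sub>R x, c*a)\<in>G"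
    and "\<And>x a. (x,a)\<in>G \<Longrightarrow> a \<le> norm x"
  shows "hbgood y0 G"
  using assms unfolding hbgood_def by blast

lemma hbgood_unique:
  assumes "hbgood y0 G" "(x,a)\<in>G" "(x,b)\<in>G" shows "a = b"
proof -
  have "(x + (-1) *\<^sub>R x, a + (-1)*b) \<in> G" "(x + (-1) *\<^sub>R x, b + (-1)*a) \<in> G"
    using assms unfolding hbgood_def by blast+
  then have "a - b \<le> 0" "b - a \<le> 0" using assms(1) unfolding hbgood_def
    by (metis add.commute diff_conv_add_uminus mult_minus1 norm_zero scaleR_minus1_left add.right_inverse)+
  then show ?thesis by simp
qed

lemma hbgood_extend:
  assumes g: "hbgood y0 M" and y1: "\<forall>a. (y1,a) \<notin> M"
  shows "\<exists>M'. hbgood y0 M' \<and> M \<subseteq> M' \<and> M' \<noteq> M"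
proof -
  have add: "\<And>x a y b. (x,a)\<in>M \<Longrightarrow> (y,b)\<in>M \<Longrightarrow> (x+y,a+b)\<in>M"
   and scl: "\<And>x a c. (x,a)\<in>M \<Longrightarrow> (c *\<^sub>R x, c*a)\<in>M"
   and bnd: "\<And>x a. (x,a)\<in>M \<Longrightarrow> a \<le> norm x"
   and y0: "(y0, norm y0) \<in> M"
    using g unfolding hbgood_def by blast+
  have zero: "(0,0) \<in> M" using scl[OF y0, of 0] by simp
  define S where "S = (\<lambda>p. snd p - norm (fst p - y1)) ` M"
  have key: "a - norm (x - y1) \<le> norm (z + y1) - b" if "(x,a)\<in>M" "(z,b)\<in>M" for x a z b
  proof -
    have "a + b \<le> norm (x + z)" using bnd[OF add[OF that]] .
    also have "x + z = (x - y1) + (z + y1)" by simp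
    also have "norm \<dots> \<le> norm (x - y1) + norm (z + y1)" by (rule norm_triangle_ineq)
    finally show ?thesis by simp
  qed
  define c where "c = Sup S"
  have Sne: "S \<noteq> {}" using zero S_def by auto
  have Sbdd: "bdd_above S" unfolding S_def bdd_above_def
    using key[OF _ zero] by force
  have c1: "a - norm (x - y1) \<le> c" if "(x,a)\<in>M" for x a
    unfolding c_def by (rule cSup_upper[OF _ Sbdd]) (use that S_def in force)
  have c2: "c \<le> norm (z + y1) - b" if "(z,b)\<in>M" for z b
    unfolding c_def by (rule cSup_least[OF Sne]) (use key[OF _ that] S_def in force)
  define M' where "M' = {(x + t *\<^sub>R y1, a + t * c) | x a t. (x,a)\<in>M}"
  have "hbgood y0 M'"
    unfolding hbgood_def
  proof (intro conjI allI impI)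
    show "(y0, norm y0) \<in> M'" unfolding M'_def using y0 by force
  next
    fix x a y b assume "(x,a)\<in>M'" "(y,b)\<in>M'"
    then obtain x1 a1 t1 x2 a2 t2 where "(x1,a1)\<in>M" "(x2,a2)\<in>M"
      "x = x1 + t1 *\<^sub>R y1" "a = a1 + t1*c" "y = x2 + t2 *\<^sub>R y1" "b = a2 + t2*c"
      unfolding M'_def by blast
    then show "(x+y, a+b)\<in>M'" unfolding M'_def
      by (intro CollectI exI[of _ "x1+x2"] exI[of _ "a1+a2"] exI[of _ "t1+t2"])
         (auto simp: add algebra_simps)
  next
    fix x a r assume "(x,a)\<in>M'"
    then obtain x1 a1 t1 where "(x1,a1)\<in>M" "x = x1 + t1 *\<^sub>R y1" "a = a1 + t1*c"
      unfolding M'_def by blast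
    have m1: "(r *\<^sub>R x1, r*a1) \<in> M" using scl[OF \<open>(x1,a1)\<in>M\<close>] .
    have e1: "r *\<^sub>R x = r *\<^sub>R x1 + (r*t1) *\<^sub>R y1" using \<open>x = x1 + t1 *\<^sub>R y1\<close>
      by (simp add: scaleR_add_right)
    have e2: "r*a = r*a1 + (r*t1)*c" using \<open>a = a1 + t1*c\<close> by (simp add: algebra_simps)
    show "(r *\<^sub>R x, r*a)\<in>M'" unfolding M'_def e1 e2 using m1 by blast
  next
    fix x a assume "(x,a)\<in>M'"
    then obtain x1 a1 t where m: "(x1,a1)\<in>M" and xa: "x = x1 + t *\<^sub>R y1" "a = a1 + t*c"
      unfolding M'_def by blast
    consider "t = 0" | "t > 0" | "t < 0" by linarith
    then show "a \<le> norm x"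
    proof cases
      case 1 then show ?thesis using bnd[OF m] xa by simp
    next
      case 2
      have "c \<le> norm ((1/t) *\<^sub>R x1 + y1) - (1/t)*a1" using c2[OF scl[OF m]] .
      then have "t * c \<le> t * (norm ((1/t) *\<^sub>R x1 + y1) - (1/t)*a1)"
        using 2 by (simp add: mult_left_mono)
      also have "\<dots> = norm (t *\<^sub>R ((1/t) *\<^sub>R x1 + y1)) - a1" using 2
        by (simp add: right_diff_distrib)
      also have "t *\<^sub>R ((1/t) *\<^sub>R x1 + y1) = x" using 2 xa by (simp add: scaleR_add_right)
      finally show ?thesis using xa by simp
    next
      case 3
      define s where "s = - t"
      have s: "s > 0" using 3 s_def by simp
      have "(1/s)*a1 - norm ((1/s) *\<^sub>R x1 - y1) \<le> c" using c1[OF scl[OF m]] .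
      then have "s * ((1/s)*a1 - norm ((1/s) *\<^sub>R x1 - y1)) \<le> s * c"
        using s by (simp add: mult_left_mono)
      moreover have "s * ((1/s)*a1 - norm ((1/s) *\<^sub>R x1 - y1)) = a1 - norm (s *\<^sub>R ((1/s) *\<^sub>R x1 - y1))"
        using s by (simp add: right_diff_distrib)
      moreover have "s *\<^sub>R ((1/s) *\<^sub>R x1 - y1) = x" using s xa s_def by (simp add: scaleR_diff_right)
      ultimately have "a1 - norm x \<le> s * c" by metis
      then show ?thesis using xa s_def by simp
    qed
  qed
  moreover have "M \<subseteq> M'" unfolding M'_def by force
  moreover have "(y1, c) \<in> M'" unfolding M'_def
    by (intro CollectI exI[of _ 0] exI[of _ 0] exI[of _ 1]) (simp add: zero)
  then have "M' \<noteq> M" using y1 by blast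
  ultimately show ?thesis by blast
qed

lemma hahn_banach_norming:
  fixes y0 :: "'b::real_normed_vector"
  shows "\<exists>f::'b \<Rightarrow>\<^sub>L real. norm f \<le> 1 \<and> blinfun_apply f y0 = norm y0"
proof -
  define A where "A = {G. hbgood y0 G}"
  define G0 where "G0 = {(t *\<^sub>R y0, t * norm y0) | t. True}"
  have G0: "hbgood y0 G0" unfolding hbgood_def G0_def
  proof (intro conjI allI impI)
    show "(y0, norm y0) \<in> {(t *\<^sub>R y0, t * norm y0) |t. True}"
      by (intro CollectI exI[of _ 1]) simp
  next
    fix x a y b assume "(x,a) \<in> {(t *\<^sub>R y0, t * norm y0) |t. True}" "(y,b) \<in> {(t *\<^sub>R y0, t * norm y0) |t. True}"
    then obtain t1 t2 where "x = t1 *\<^sub>R y0" "a = t1 * norm y0" "y = t2 *\<^sub>R y0" "b = t2 * norm y0" by blast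
    then show "(x+y, a+b) \<in> {(t *\<^sub>R y0, t * norm y0) |t. True}"
      by (intro CollectI exI[of _ "t1+t2"]) (simp add: algebra_simps)
  next
    fix x a r assume "(x,a) \<in> {(t *\<^sub>R y0, t * norm y0) |t. True}"
    then obtain t1 where "x = t1 *\<^sub>R y0" "a = t1 * norm y0" by blast
    then show "(r *\<^sub>R x, r*a) \<in> {(t *\<^sub>R y0, t * norm y0) |t. True}"
      by (intro CollectI exI[of _ "r*t1"]) (simp add: algebra_simps)
  next
    fix x a assume "(x,a) \<in> {(t *\<^sub>R y0, t * norm y0) |t. True}"
    then obtain t1 where "x = t1 *\<^sub>R y0" "a = t1 * norm y0" by blast
    then show "a \<le> norm x" by (simp add: mult_right_mono)
  qed
  have "\<exists>M\<in>A. \<forall>X\<in>A. M \<subseteq> X \<longrightarrow> X = M"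
  proof (rule Zorn_Lemma2, rule ballI)
    fix C assume C: "C \<in> chains A"
    show "\<exists>U\<in>A. \<forall>X\<in>C. X \<subseteq> U"
    proof (cases "C = {}")
      case True
      have "G0 \<in> A" using G0 A_def by simp
      then show ?thesis using True by blast
    next
      case False
      have CA: "C \<subseteq> A" and ch: "\<And>X Y. X\<in>C \<Longrightarrow> Y\<in>C \<Longrightarrow> X \<subseteq> Y \<or> Y \<subseteq> X"
        using C unfolding chains_def chain_subset_def by auto
      have hg: "\<And>X. X \<in> C \<Longrightarrow> hbgood y0 X" using CA A_def by auto
      have "hbgood y0 (\<Union>C)"
      proof (rule hbgoodI)
        obtain X where "X \<in> C" using False by blast
        then show "(y0, norm y0) \<in> \<Union>C" using hbgoodD(1)[OF hg] by blast
      next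
        fix x a y b assume "(x,a) \<in> \<Union>C" "(y,b) \<in> \<Union>C"
        then obtain X Y where XY: "X\<in>C" "Y\<in>C" "(x,a)\<in>X" "(y,b)\<in>Y" by blast
        show "(x+y,a+b) \<in> \<Union>C"
        proof (cases "X \<subseteq> Y")
          case True
          then have "(x+y,a+b) \<in> Y" using hbgoodD(2)[OF hg[OF XY(2)]] XY by blast
          then show ?thesis using XY by blast
        next
          case False
          then have "Y \<subseteq> X" using ch[OF XY(1,2)] by blast
          then have "(x+y,a+b) \<in> X" using hbgoodD(2)[OF hg[OF XY(1)]] XY by blast
          then show ?thesis using XY by blast
        qed
      next
        fix x a r assume "(x,a) \<in> \<Union>C"
        then obtain X where "X \<in> C" "(x,a) \<in> X" by blast
        then show "(r *\<^sub>R x, r*a) \<in> \<Union>C" using hbgoodD(3)[OF hg] by blast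
      next
        fix x a assume "(x,a) \<in> \<Union>C"
        then obtain X where "X \<in> C" "(x,a) \<in> X" by blast
        then show "a \<le> norm x" using hbgoodD(4)[OF hg] by blast
      qed
      then have "\<Union>C \<in> A" using A_def by simp
      then show ?thesis by blast
    qed
  qed
  then obtain M where MA: "M \<in> A" and max0: "\<forall>X\<in>A. M \<subseteq> X \<longrightarrow> X = M" by blast
  have M: "hbgood y0 M" using MA A_def by simp
  have max: "X = M" if "hbgood y0 X" "M \<subseteq> X" for X using max0 that A_def by simp
  have tot: "\<exists>a. (v,a) \<in> M" for v
    using hbgood_extend[OF M, of v] max by blast
  define f where "f v = (SOME a. (v,a) \<in> M)" for v
  have fM: "(v, f v) \<in> M" for v unfolding f_def using tot[of v] by (rule someI_ex)
  have fu: "(v, a) \<in> M \<Longrightarrow> f v = a" for v a using hbgood_unique[OF M fM] by blast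
  have Madd: "\<And>x a y b. (x,a)\<in>M \<Longrightarrow> (y,b)\<in>M \<Longrightarrow> (x+y,a+b)\<in>M"
   and Mscl: "\<And>x a c. (x,a)\<in>M \<Longrightarrow> (c *\<^sub>R x, c*a)\<in>M"
   and Mbnd: "\<And>x a. (x,a)\<in>M \<Longrightarrow> a \<le> norm x"
   and My0: "(y0, norm y0) \<in> M"
    using M unfolding hbgood_def by blast+
  have fadd: "f (x + y) = f x + f y" for x y
    by (rule fu[OF Madd[OF fM fM]])
  have fscl: "f (r *\<^sub>R x) = r * f x" for r x
    by (rule fu[OF Mscl[OF fM]])
  have fle: "f v \<le> norm v" for v using Mbnd[OF fM] .
  have fabs: "\<bar>f v\<bar> \<le> norm v" for v
    using fle[of v] fle[of "(-1) *\<^sub>R v"] fscl[of "-1" v] by simp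
  have lin: "linear f" by (rule linearI) (simp_all add: fadd fscl)
  have bl: "bounded_linear f"
    by (rule bounded_linear_intro[where K=1]) (use fabs in \<open>simp_all add: fadd fscl\<close>)
  have "norm (Blinfun f) \<le> 1"
    by (rule norm_blinfun_bound) (auto simp: bounded_linear_Blinfun_apply[OF bl] fabs)
  moreover have "f y0 = norm y0" using fu[OF My0] .
  ultimately show ?thesis using bounded_linear_Blinfun_apply[OF bl] by metis
qed


lemma norm_le_by_functionals:
  fixes v :: "'b::real_normed_vector"
  assumes "\<And>f::'b \<Rightarrow>\<^sub>L real. norm f \<le> 1 \<Longrightarrow> blinfun_apply f v \<le> c"
  shows "norm v \<le> c"
proof -
  obtain f :: "'b \<Rightarrow>\<^sub>L real" where "norm f \<le> 1" "blinfun_apply f v = norm v"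
    using hahn_banach_norming[of v] by blast
  then show ?thesis using assms[of f] by simp
qed

lemma scaled_deriv:
  fixes F :: "'a::real_normed_vector \<Rightarrow> 'b::real_normed_vector" and L :: real
  assumes H: "\<forall>ys :: 'b \<Rightarrow>\<^sub>L real. norm ys \<le> 1 \<longrightarrow>
           (\<exists>D :: 'a \<Rightarrow> ('a \<Rightarrow>\<^sub>L real).
              (\<forall>x. ((\<lambda>z. blinfun_apply ys (F z)) has_derivative blinfun_apply (D x)) (at x)) \<and>
              (\<forall>x y. norm (D x - D y) \<le> L * norm (x - y)))"
  shows "\<exists>D :: 'a \<Rightarrow> ('a \<Rightarrow>\<^sub>L real).
              (\<forall>x. ((\<lambda>z. blinfun_apply ys (F z)) has_derivative blinfun_apply (D x)) (at x)) \<and>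
              (\<forall>x y. norm (D x - D y) \<le> L * norm ys * norm (x - y))"
proof (cases "ys = 0")
  case True
  show ?thesis
  proof (rule exI[of _ "\<lambda>x. 0"], intro conjI allI)
    fix x
    have z: "blinfun_apply (0::'a \<Rightarrow>\<^sub>L real) = (\<lambda>h. 0)" by (simp add: fun_eq_iff)
    show "((\<lambda>z. blinfun_apply ys (F z)) has_derivative blinfun_apply ((\<lambda>x. 0::'a \<Rightarrow>\<^sub>L real) x)) (at x)"
      unfolding z by (simp add: True has_derivative_const)
  qed (simp add: True)
next
  case False
  define u where "u = (1 / norm ys) *\<^sub>R ys"
  have nu: "norm u = 1" using False u_def by simp
  have ysu: "ys = norm ys *\<^sub>R u" using False u_def by simp
  have "norm u \<le> 1" using nu by simp
  with H have "\<exists>D :: 'a \<Rightarrow> ('a \<Rightarrow>\<^sub>L real).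
              (\<forall>x. ((\<lambda>z. blinfun_apply u (F z)) has_derivative blinfun_apply (D x)) (at x)) \<and>
              (\<forall>x y. norm (D x - D y) \<le> L * norm (x - y))" by blast
  then obtain D where D: "\<And>x. ((\<lambda>z. blinfun_apply u (F z)) has_derivative blinfun_apply (D x)) (at x)"
    and DL: "\<And>x y. norm (D x - D y) \<le> L * norm (x - y)"
    by blast
  show ?thesis
  proof (intro exI[of _ "\<lambda>x. norm ys *\<^sub>R D x"] conjI allI)
    fix x
    have "((\<lambda>z. norm ys * blinfun_apply u (F z)) has_derivative (\<lambda>h. norm ys * blinfun_apply (D x) h)) (at x)"
      by (rule has_derivative_mult_right[OF D])
    moreover have "(\<lambda>z. blinfun_apply ys (F z)) = (\<lambda>z. norm ys * blinfun_apply u (F z))"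
      by (subst ysu) (simp add: scaleR_blinfun.rep_eq)
    moreover have "blinfun_apply (norm ys *\<^sub>R D x) = (\<lambda>h. norm ys * blinfun_apply (D x) h)"
      by (simp add: scaleR_blinfun.rep_eq fun_eq_iff)
    ultimately show "((\<lambda>z. blinfun_apply ys (F z)) has_derivative blinfun_apply (norm ys *\<^sub>R D x)) (at x)"
      by simp
  next
    fix x y
    have "norm (norm ys *\<^sub>R D x - norm ys *\<^sub>R D y) = norm ys * norm (D x - D y)"
      by (metis norm_scaleR abs_norm_cancel scaleR_right_diff_distrib)
    also have "\<dots> \<le> norm ys * (L * norm (x - y))" using DL by (simp add: mult_left_mono)
    finally show "norm (norm ys *\<^sub>R D x - norm ys *\<^sub>R D y) \<le> L * norm ys * norm (x - y)"
      by (simp add: algebra_simps)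
  qed
qed

theorem lemma2p3:
  fixes F :: "'a::banach \<Rightarrow> 'b::banach" and L :: real
  assumes "reflexive_space TYPE('b)"
    and "continuous_on UNIV F"
    and "L > 0"
    and "\<forall>ys :: 'b \<Rightarrow>\<^sub>L real. norm ys \<le> 1 \<longrightarrow>
           (\<exists>D :: 'a \<Rightarrow> ('a \<Rightarrow>\<^sub>L real).
              (\<forall>x. ((\<lambda>z. blinfun_apply ys (F z)) has_derivative blinfun_apply (D x)) (at x)) \<and>
              (\<forall>x y. norm (D x - D y) \<le> L * norm (x - y)))"
  shows "\<exists>D :: 'a \<Rightarrow> ('a \<Rightarrow>\<^sub>L 'b).
           (\<forall>x. (F has_derivative blinfun_apply (D x)) (at x)) \<and>
           (\<forall>x y. norm (D x - D y) \<le> L * norm (x - y))"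
proof -
  have "\<forall>ys. \<exists>D :: 'a \<Rightarrow> ('a \<Rightarrow>\<^sub>L real).
              (\<forall>x. ((\<lambda>z. blinfun_apply ys (F z)) has_derivative blinfun_apply (D x)) (at x)) \<and>
              (\<forall>x y. norm (D x - D y) \<le> L * norm ys * norm (x - y))"
    using scaled_deriv[OF assms(4)] by blast
  then obtain Dy :: "('b \<Rightarrow>\<^sub>L real) \<Rightarrow> 'a \<Rightarrow> ('a \<Rightarrow>\<^sub>L real)" where
    dY: "\<And>ys x. ((\<lambda>z. blinfun_apply ys (F z)) has_derivative blinfun_apply (Dy ys x)) (at x)" and
    lY: "\<And>ys x y. norm (Dy ys x - Dy ys y) \<le> L * norm ys * norm (x - y)"
    by metis
  have E: "norm (blinfun_apply ys (F (x + h)) - blinfun_apply ys (F x) - blinfun_apply (Dy ys x) h)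
      \<le> norm h * (L * norm ys * norm h)" for ys x h
  proof -
    define S where "S = {x + t *\<^sub>R h | t. t \<in> {0..1}}"
    have "norm (blinfun_apply ys (F (x + h)) - blinfun_apply ys (F x) - blinfun_apply (Dy ys x) ((x + h) - x))
      \<le> norm ((x + h) - x) * (L * norm ys * norm h)"
    proof (rule differentiable_bound_linearization[where S=S])
      show "x + t *\<^sub>R (x + h - x) \<in> S" if "t \<in> {0..1}" for t using that S_def by auto
      show "((\<lambda>z. blinfun_apply ys (F z)) has_derivative blinfun_apply (Dy ys z)) (at z within S)" for z
        using dY has_derivative_at_withinI by blast
      show "x \<in> S" unfolding S_def by (intro CollectI exI[of _ 0]) simp
      fix z assume "z \<in> S"
      then obtain t where t: "t \<in> {0..1}" "z = x + t *\<^sub>R h" using S_def by auto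
      have "onorm (blinfun_apply (Dy ys z) - blinfun_apply (Dy ys x)) = norm (Dy ys z - Dy ys x)"
        by (simp add: norm_blinfun.rep_eq minus_blinfun.rep_eq fun_diff_def)
      also have "\<dots> \<le> L * norm ys * norm (z - x)" by (rule lY)
      also have "norm (z - x) \<le> norm h" using t by (simp add: mult_left_le_one_le)
      then have "L * norm ys * norm (z - x) \<le> L * norm ys * norm h"
        using assms(3) by (simp add: mult_left_mono)
      finally show "onorm (blinfun_apply (Dy ys z) - blinfun_apply (Dy ys x)) \<le> L * norm ys * norm h" .
    qed
    then show ?thesis by simp
  qed
  have Dadd: "blinfun_apply (Dy (ys1 + ys2) x) h = blinfun_apply (Dy ys1 x) h + blinfun_apply (Dy ys2 x) h"
    for ys1 ys2 x h
  proof -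
    have "((\<lambda>z. blinfun_apply (ys1 + ys2) (F z)) has_derivative (\<lambda>h. blinfun_apply (Dy ys1 x) h + blinfun_apply (Dy ys2 x) h)) (at x)"
      using has_derivative_add[OF dY[of ys1 x] dY[of ys2 x]] by (simp add: plus_blinfun.rep_eq)
    from has_derivative_unique[OF dY[of "ys1 + ys2" x] this] show ?thesis by metis
  qed
  have Dscl: "blinfun_apply (Dy (r *\<^sub>R ys) x) h = r * blinfun_apply (Dy ys x) h" for r ys x h
  proof -
    have "((\<lambda>z. blinfun_apply (r *\<^sub>R ys) (F z)) has_derivative (\<lambda>h. r * blinfun_apply (Dy ys x) h)) (at x)"
      using has_derivative_mult_right[OF dY[of ys x], of r] by (simp add: scaleR_blinfun.rep_eq)
    from has_derivative_unique[OF dY[of "r *\<^sub>R ys" x] this] show ?thesis by metis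
  qed
  have Dbnd: "\<bar>blinfun_apply (Dy ys x) h\<bar> \<le> norm ys * (norm (F (x + h) - F x) + L * norm h * norm h)" for ys x h
  proof -
    have "\<bar>blinfun_apply ys (F (x + h)) - blinfun_apply ys (F x)\<bar> \<le> norm ys * norm (F (x + h) - F x)"
      by (metis blinfun.diff_right norm_blinfun real_norm_def)
    with E[of ys x h] have "\<bar>blinfun_apply (Dy ys x) h\<bar> \<le> norm ys * norm (F (x + h) - F x) + norm h * (L * norm ys * norm h)"
      by (smt (verit, best) real_norm_def)
    then show ?thesis by (simp add: algebra_simps)
  qed
  have "\<exists>y. \<forall>ys. blinfun_apply (Dy ys x) h = blinfun_apply ys y" for x h
  proof -
    have bl: "bounded_linear (\<lambda>ys. blinfun_apply (Dy ys x) h)"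
      by (rule bounded_linear_intro[where K="norm (F (x + h) - F x) + L * norm h * norm h"])
         (use Dadd Dscl Dbnd in \<open>auto simp: mult.commute\<close>)
    from assms(1)[unfolded reflexive_space_def, rule_format, of "Blinfun (\<lambda>ys. blinfun_apply (Dy ys x) h)"]
    show ?thesis unfolding bounded_linear_Blinfun_apply[OF bl] by blast
  qed
  then obtain G :: "'a \<Rightarrow> 'a \<Rightarrow> 'b" where Gp: "\<And>ys x h. blinfun_apply ys (G x h) = blinfun_apply (Dy ys x) h"
    by metis
  have sep: "v = 0" if "\<And>f::'b \<Rightarrow>\<^sub>L real. blinfun_apply f v = 0" for v :: 'b
    using norm_le_by_functionals[of v 0] that by simp
  have Gadd: "G x (a + b) = G x a + G x b" for x a b
    by (rule sep[THEN eq_iff_diff_eq_0[THEN iffD2]]) (simp add: blinfun.diff_right blinfun.add_right Gp)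
  have Gscl: "G x (r *\<^sub>R a) = r *\<^sub>R G x a" for x a r
    by (rule sep[THEN eq_iff_diff_eq_0[THEN iffD2]]) (simp add: blinfun.diff_right blinfun.scaleR_right Gp)
  have Gbl: "bounded_linear (G x)" for x
  proof -
    obtain d where d: "d > 0" "\<And>z. dist z x < d \<Longrightarrow> dist (F z) (F x) < 1"
      using assms(2) unfolding continuous_on_iff by (meson UNIV_I zero_less_one)
    define \<delta> where "\<delta> = d / 2"
    have dp: "\<delta> > 0" using d \<delta>_def by simp
    define M where "M = 1 + L * \<delta> * \<delta>"
    have ball: "norm (G x h) \<le> M" if "norm h = \<delta>" for h
    proof (rule norm_le_by_functionals)
      fix f :: "'b \<Rightarrow>\<^sub>L real" assume f: "norm f \<le> 1"
      have "norm (F (x + h) - F x) < 1" using d(2)[of "x + h"] that \<delta>_def d(1) by (simp add: dist_norm)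
      then have "norm f * (norm (F (x + h) - F x) + L * norm h * norm h) \<le> M"
        using f that M_def assms(3) dp
        by (smt (verit, ccfv_SIG) mult_left_le_one_le mult_nonneg_nonneg norm_ge_zero)
      then show "blinfun_apply f (G x h) \<le> M" using Dbnd[of f x h] Gp by simp
    qed
    show ?thesis
    proof (rule bounded_linear_intro[where K="M / \<delta>"])
      fix h
      show "norm (G x h) \<le> norm h * (M / \<delta>)"
      proof (cases "h = 0")
        case True
        then show ?thesis using Gscl[of x 0 h] by simp
      next
        case False
        define k where "k = \<delta> / norm h"
        have kp: "k > 0" using False dp k_def by simp
        have "norm (k *\<^sub>R h) = \<delta>" using False dp k_def by simp
        then have "norm (G x (k *\<^sub>R h)) \<le> M" by (rule ball)
        then have "k * norm (G x h) \<le> M" using Gscl kp by simp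
        then have "norm (G x h) \<le> M / k" using kp by (simp add: field_simps)
        also have "M / k = norm h * (M / \<delta>)" unfolding k_def using False dp by (simp add: field_simps)
        finally show ?thesis .
      qed
    qed (simp_all add: Gadd Gscl)
  qed
  have Ga: "blinfun_apply (Blinfun (G x)) = G x" for x
    using bounded_linear_Blinfun_apply[OF Gbl] .
  show ?thesis
  proof (intro exI[of _ "\<lambda>x. Blinfun (G x)"] conjI allI)
    fix x
    have est: "norm (F y - F x - G x (y - x)) \<le> L * norm (y - x) * norm (y - x)" for y
    proof (rule norm_le_by_functionals)
      fix f :: "'b \<Rightarrow>\<^sub>L real" assume f: "norm f \<le> 1"
      have "blinfun_apply f (F y - F x - G x (y - x)) =
          blinfun_apply f (F (x + (y - x))) - blinfun_apply f (F x) - blinfun_apply (Dy f x) (y - x)"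
        by (simp add: blinfun.diff_right Gp)
      also have "\<dots> \<le> norm (y - x) * (L * norm f * norm (y - x))"
        using E[of f x "y - x"] by simp
      also have "\<dots> \<le> L * norm (y - x) * norm (y - x)"
        using f assms(3) by (simp add: mult_left_le_one_le mult.assoc mult.left_commute)
      finally show "blinfun_apply f (F y - F x - G x (y - x)) \<le> L * norm (y - x) * norm (y - x)" .
    qed
    have lim: "((\<lambda>y. norm (F y - F x - G x (y - x)) / norm (y - x)) \<longlongrightarrow> 0) (at x)"
    proof (rule Lim_null_comparison)
      show "\<forall>\<^sub>F y in at x. norm (norm (F y - F x - G x (y - x)) / norm (y - x)) \<le> L * norm (y - x)"
      proof (rule always_eventually, rule allI)
        fix y
        show "norm (norm (F y - F x - G x (y - x)) / norm (y - x)) \<le> L * norm (y - x)"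
        proof (cases "y = x")
          case True then show ?thesis by simp
        next
          case False
          then have "norm (y - x) > 0" by simp
          then show ?thesis using est[of y] by (simp add: divide_le_eq)
        qed
      qed
      have "((\<lambda>y. L * norm (y - x)) \<longlongrightarrow> L * norm (x - x)) (at x)"
        by (intro tendsto_intros)
      then show "((\<lambda>y. L * norm (y - x)) \<longlongrightarrow> 0) (at x)" by simp
    qed
    show "(F has_derivative blinfun_apply (Blinfun (G x))) (at x)"
      unfolding has_derivative_iff_norm Ga using Gbl lim by blast
  next
    fix x y
    show "norm (Blinfun (G x) - Blinfun (G y)) \<le> L * norm (x - y)"
    proof (rule norm_blinfun_bound)
      show "0 \<le> L * norm (x - y)" using assms(3) by simp
      fix h
      show "norm (blinfun_apply (Blinfun (G x) - Blinfun (G y)) h) \<le> L * norm (x - y) * norm h"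
      proof (rule norm_le_by_functionals)
        fix f :: "'b \<Rightarrow>\<^sub>L real" assume f: "norm f \<le> 1"
        have "blinfun_apply f (blinfun_apply (Blinfun (G x) - Blinfun (G y)) h)
            = blinfun_apply (Dy f x - Dy f y) h"
          by (simp add: minus_blinfun.rep_eq Ga blinfun.diff_right Gp)
        also have "\<dots> \<le> norm (Dy f x - Dy f y) * norm h"
          by (metis norm_blinfun real_norm_def abs_ge_self order_trans)
        also have "\<dots> \<le> L * norm f * norm (x - y) * norm h"
          by (rule mult_right_mono[OF lY norm_ge_zero])
        also have "\<dots> \<le> L * norm (x - y) * norm h"
          using f assms(3)
          by (simp add: mult_left_le_one_le mult_nonneg_nonneg mult.assoc mult.left_commute)
        finally show "blinfun_apply f (blinfun_apply (Blinfun (G x) - Blinfun (G y)) h) \<le> L * norm (x - y) * norm h" .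
      qed
    qed
  qed
qed

end
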